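(* Let $\mu_1,\mu_2\in(0,1)$ with $\mu_1>\mu_2$, and let $\mathcal{H}_\mu(\rho)=H_0\rho H_0^\dagger+H_1\rho H_1^\dagger$ with $H_0=|0\rangle\langle0|+\sqrt{\mu}\,|1\rangle\langle1|$ and $H_1=\sqrt{1-\mu}\,|0\rangle\langle1|$ be the qubit amplitude damping channel. Then all maximally entangled states of $\mathbb{C}^2\otimes\mathbb{C}^2$ are equivalent probes for distinguishing $\mathcal{H}_{\mu_1}$ and $\mathcal{H}_{\mu_2}$: the quantity $\|(\mathcal{H}_{\mu_1}\otimes\mathrm{id})(\rho_{AB})-(\mathcal{H}_{\mu_2}\otimes\mathrm{id})(\rho_{AB})\|_1$ (hence the success probability) takes the same value for every maximally entangled pure state $\rho_{AB}$.
   Context: For two channels chosen with equal priors $1/2$ and a bipartite probe $\rho_{AB}$ (channel acting on subsystem $A$), the single-shot success probability is $\frac12+\frac14\|(\mathcal{N}_1\otimes\mathrm{id})(\rho_{AB})-(\mathcal{N}_2\otimes\mathrm{id})(\rho_{AB})\|_1$, where $\|\cdot\|_1$ is the trace norm. A two-qubit pure state is maximally entangled if its reduced states are $\mathbb{I}_2/2$. Probes are equivalent if they give the same success probability. *)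

theory Defs
  imports "Jordan_Normal_Form.Char_Poly"
begin

(* Two-qubit system A (x) B; basis index of |a>|b> is 2*a + b. *)

definition adj :: "complex mat \<Rightarrow> complex mat" where
  "adj M = mat (dim_col M) (dim_row M) (\<lambda>(i,j). cnj (M $$ (j,i)))"

(* Trace norm = sum of singular values = sum of square roots of the eigenvalues
   (with multiplicity) of M^dagger M. *)
definition trace_norm :: "complex mat \<Rightarrow> real" where
  "trace_norm M = sum_mset (image_mset (\<lambda>x. sqrt (Re x)) (proots (char_poly (adj M * M))))"

definition kron :: "complex mat \<Rightarrow> complex mat \<Rightarrow> complex mat" where
  "kron X Y = mat (dim_row X * dim_row Y) (dim_col X * dim_col Y)
     (\<lambda>(i,j). X $$ (i div dim_row Y, j div dim_col Y) * Y $$ (i mod dim_row Y, j mod dim_col Y))"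

definition H0 :: "real \<Rightarrow> complex mat" where
  "H0 \<mu> = mat 2 2 (\<lambda>(i,j). if i = 0 \<and> j = 0 then 1
                            else if i = 1 \<and> j = 1 then complex_of_real (sqrt \<mu>) else 0)"

definition H1 :: "real \<Rightarrow> complex mat" where
  "H1 \<mu> = mat 2 2 (\<lambda>(i,j). if i = 0 \<and> j = 1 then complex_of_real (sqrt (1 - \<mu>)) else 0)"

definition amp_damp_A :: "real \<Rightarrow> complex mat \<Rightarrow> complex mat" where
  "amp_damp_A \<mu> \<rho> =
     kron (H0 \<mu>) (1\<^sub>m 2) * \<rho> * adj (kron (H0 \<mu>) (1\<^sub>m 2))
   + kron (H1 \<mu>) (1\<^sub>m 2) * \<rho> * adj (kron (H1 \<mu>) (1\<^sub>m 2))"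

definition ptrace_B :: "complex mat \<Rightarrow> complex mat" where
  "ptrace_B \<rho> = mat 2 2 (\<lambda>(a,a'). \<Sum>b<2. \<rho> $$ (2*a+b, 2*a'+b))"

definition ptrace_A :: "complex mat \<Rightarrow> complex mat" where
  "ptrace_A \<rho> = mat 2 2 (\<lambda>(b,b'). \<Sum>a<2. \<rho> $$ (2*a+b, 2*a+b'))"

definition proj :: "complex vec \<Rightarrow> complex mat" where
  "proj \<psi> = mat (dim_vec \<psi>) (dim_vec \<psi>) (\<lambda>(i,j). \<psi> $ i * cnj (\<psi> $ j))"

definition max_ent_pure :: "complex mat \<Rightarrow> bool" where
  "max_ent_pure \<rho> \<longleftrightarrow>
     (\<exists>\<psi>. \<psi> \<in> carrier_vec 4 \<and> (\<Sum>i<4. (cmod (\<psi> $ i))\<^sup>2) = 1 \<and> \<rho> = proj \<psi>)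
     \<and> ptrace_A \<rho> = (1/2) \<cdot>\<^sub>m 1\<^sub>m 2 \<and> ptrace_B \<rho> = (1/2) \<cdot>\<^sub>m 1\<^sub>m 2"

end

theory Submission
  imports Defs
begin

lemma adj_carrier[simp]: "A \<in> carrier_mat n m \<Longrightarrow> adj A \<in> carrier_mat m n"
  by (auto simp: adj_def)
lemma adj_dims[simp]: "dim_row (adj A) = dim_col A" "dim_col (adj A) = dim_row A"
  by (auto simp: adj_def)
lemma adj_index[simp]: "i < dim_col A \<Longrightarrow> j < dim_row A \<Longrightarrow> adj A $$ (i,j) = cnj (A $$ (j,i))"
  by (auto simp: adj_def)

lemma adj_adj[simp]: "adj (adj A) = A"
  by (rule eq_matI) auto

lemma adj_mult: assumes "A \<in> carrier_mat n m" "B \<in> carrier_mat m k"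
  shows "adj (A * B) = adj B * adj A"
  using assms by (intro eq_matI) (auto simp: scalar_prod_def mult.commute)

lemma adj_minus: assumes "A \<in> carrier_mat n m" "B \<in> carrier_mat n m"
  shows "adj (A - B) = adj A - adj B"
  using assms by (intro eq_matI) auto

lemma sum4: "(\<Sum>i<4. f (i::nat)) = f 0 + f 1 + f 2 + (f 3 :: 'a::comm_monoid_add)"
  by (simp add: numeral_eq_Suc)
lemma sum4': "(\<Sum>i\<in>{0..<4}. f (i::nat)) = f 0 + f 1 + f 2 + (f 3 :: 'a::comm_monoid_add)"
  by (simp add: numeral_eq_Suc atLeast0LessThan)
lemma sum2': "(\<Sum>i\<in>{0..<2}. f (i::nat)) = f 0 + (f 1 :: 'a::comm_monoid_add)"
  by (simp add: numeral_eq_Suc atLeast0LessThan)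
lemma less4: "(i::nat) < 4 \<longleftrightarrow> i = 0 \<or> i = 1 \<or> i = 2 \<or> i = 3" by auto
lemma less2: "(i::nat) < 2 \<longleftrightarrow> i = 0 \<or> i = 1" by auto

lemma kron_carrier[simp]: "kron X Y \<in> carrier_mat (dim_row X * dim_row Y) (dim_col X * dim_col Y)"
  by (simp add: kron_def)

lemma kron_comm:
  fixes H V :: "complex mat"
  assumes "H \<in> carrier_mat 2 2" "V \<in> carrier_mat 2 2"
  shows "kron H (1\<^sub>m 2) * kron (1\<^sub>m 2) V = kron (1\<^sub>m 2) V * kron H (1\<^sub>m 2)"
  using assms
  apply (intro eq_matI)
  apply (auto simp: kron_def scalar_prod_def sum4' less4)
  done

lemma H0_carrier[simp]: "H0 m \<in> carrier_mat 2 2" by (simp add: H0_def)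
lemma H1_carrier[simp]: "H1 m \<in> carrier_mat 2 2" by (simp add: H1_def)

lemma K_carrier: "H \<in> carrier_mat 2 2 \<Longrightarrow> kron H (1\<^sub>m 2) \<in> carrier_mat 4 4"
  using kron_carrier[of H "1\<^sub>m 2"] by simp
lemma W_carrier: "V \<in> carrier_mat 2 2 \<Longrightarrow> kron (1\<^sub>m 2) V \<in> carrier_mat 4 4"
  using kron_carrier[of "1\<^sub>m 2" V] by simp

lemma assoc4: "A \<in> carrier_mat 4 4 \<Longrightarrow> B \<in> carrier_mat 4 4 \<Longrightarrow> C \<in> carrier_mat 4 4 \<Longrightarrow> A * B * C = A * (B * C)"
  by (rule assoc_mult_mat)
lemma mult4: "A \<in> carrier_mat 4 4 \<Longrightarrow> B \<in> carrier_mat 4 4 \<Longrightarrow> A * B \<in> carrier_mat 4 4"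
  by (rule mult_carrier_mat)
lemma adj4: "A \<in> carrier_mat 4 4 \<Longrightarrow> adj A \<in> carrier_mat 4 4" by simp

lemma conj_lemma:
  fixes K W X :: "complex mat"
  assumes K: "K \<in> carrier_mat 4 4" and W: "W \<in> carrier_mat 4 4" and X: "X \<in> carrier_mat 4 4"
    and c: "K * W = W * K"
  shows "K * (W * X * adj W) * adj K = W * (K * X * adj K) * adj W"
proof -
  have c2: "adj W * adj K = adj K * adj W"
    using adj_mult[OF K W] adj_mult[OF W K] c by simp
  have aK: "adj K \<in> carrier_mat 4 4" and aW: "adj W \<in> carrier_mat 4 4" using K W by auto
  have "K * (W * X * adj W) * adj K = (K * W) * X * (adj W * adj K)"
    using K W X aK aW by (simp add: assoc4 mult4 adj4)
  also have "\<dots> = (W * K) * X * (adj K * adj W)" using c c2 by simp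
  also have "\<dots> = W * (K * X * adj K) * adj W"
    using K W X aK aW by (simp add: assoc4 mult4 adj4)
  finally show ?thesis .
qed

lemma amp_conj:
  fixes V X :: "complex mat"
  assumes V: "V \<in> carrier_mat 2 2" and X: "X \<in> carrier_mat 4 4"
  defines "W \<equiv> kron (1\<^sub>m 2) V"
  shows "amp_damp_A m (W * X * adj W) = W * amp_damp_A m X * adj W"
proof -
  have W4: "W \<in> carrier_mat 4 4" using W_carrier[OF V] W_def by simp
  have K0: "kron (H0 m) (1\<^sub>m 2) \<in> carrier_mat 4 4" by (rule K_carrier) simp
  have K1: "kron (H1 m) (1\<^sub>m 2) \<in> carrier_mat 4 4" by (rule K_carrier) simp
  have c0: "kron (H0 m) (1\<^sub>m 2) * W = W * kron (H0 m) (1\<^sub>m 2)"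
    unfolding W_def by (rule kron_comm[OF _ V]) simp
  have c1: "kron (H1 m) (1\<^sub>m 2) * W = W * kron (H1 m) (1\<^sub>m 2)"
    unfolding W_def by (rule kron_comm[OF _ V]) simp
  let ?A = "kron (H0 m) (1\<^sub>m 2) * X * adj (kron (H0 m) (1\<^sub>m 2))"
  let ?B = "kron (H1 m) (1\<^sub>m 2) * X * adj (kron (H1 m) (1\<^sub>m 2))"
  have A: "?A \<in> carrier_mat 4 4" using K0 X by auto
  have B: "?B \<in> carrier_mat 4 4" using K1 X by auto
  have "amp_damp_A m (W * X * adj W) = W * ?A * adj W + W * ?B * adj W"
    unfolding amp_damp_A_def
    using conj_lemma[OF K0 W4 X c0] conj_lemma[OF K1 W4 X c1] by simp
  also have "\<dots> = W * (?A + ?B) * adj W"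
    using mult_add_distrib_mat[OF W4 A B] add_mult_distrib_mat[OF mult4[OF W4 A] mult4[OF W4 B] adj4[OF W4]]
    by simp
  finally show ?thesis unfolding amp_damp_A_def .
qed

lemma amp_carrier: "X \<in> carrier_mat 4 4 \<Longrightarrow> amp_damp_A m X \<in> carrier_mat 4 4"
  using K_carrier[OF H0_carrier[of m]] K_carrier[OF H1_carrier[of m]]
  unfolding amp_damp_A_def by auto

lemma final_conj:
  fixes W D :: "complex mat"
  assumes W: "W \<in> carrier_mat 4 4" and D: "D \<in> carrier_mat 4 4"
    and u1: "adj W * W = 1\<^sub>m 4" and u2: "W * adj W = 1\<^sub>m 4"
  shows "char_poly (adj (W * D * adj W) * (W * D * adj W)) = char_poly (adj D * D)"
proof -
  have aW: "adj W \<in> carrier_mat 4 4" and aD: "adj D \<in> carrier_mat 4 4" using W D by auto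
  have "adj (W * D * adj W) = W * adj D * adj W"
    using adj_mult[of "W * D" 4 4 "adj W" 4] adj_mult[OF W D] W D aW aD
    by (simp add: assoc4 mult4 adj4)
  then have "adj (W * D * adj W) * (W * D * adj W) = W * (adj D * D) * adj W"
  proof -
    have "adj W * (W * (D * adj W)) = D * adj W"
      using assoc_mult_mat[OF aW W mult4[OF D aW]] u1 D aW by simp
    then show ?thesis using \<open>adj (W * D * adj W) = W * adj D * adj W\<close> W D aW aD
      by (simp add: assoc4 mult4 adj4)
  qed
  moreover have "similar_mat (W * (adj D * D) * adj W) (adj D * D)"
    unfolding similar_mat_def similar_mat_wit_def using W D aW aD u1 u2
    by (intro exI[of _ W] exI[of _ "adj W"]) (auto simp: Let_def)
  ultimately show ?thesis using char_poly_similar by metis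
qed

definition Vm :: "complex vec \<Rightarrow> complex mat" where
  "Vm \<psi> = mat 2 2 (\<lambda>(b,a). complex_of_real (sqrt 2) * \<psi> $ (2*a+b))"
definition phi :: "complex vec" where
  "phi = vec 4 (\<lambda>i. if i = 0 \<or> i = 3 then complex_of_real (1 / sqrt 2) else 0)"

lemma Vm_carrier[simp]: "Vm \<psi> \<in> carrier_mat 2 2" by (simp add: Vm_def)
lemma phi_carrier[simp]: "phi \<in> carrier_vec 4" by (simp add: phi_def)

lemma proj_mult: assumes "W \<in> carrier_mat n n" "v \<in> carrier_vec n"
  shows "proj (W *\<^sub>v v) = W * proj v * adj W"
proof (rule eq_matI)
  fix i j assume ij: "i < dim_row (W * proj v * adj W)" "j < dim_col (W * proj v * adj W)"
  then have i: "i < n" and j: "j < n" using assms by (auto simp: proj_def)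
  have "(W * proj v * adj W) $$ (i,j) = (\<Sum>l<n. (\<Sum>k<n. W $$ (i,k) * (v $ k * cnj (v $ l))) * cnj (W $$ (j,l)))"
    using assms i j by (auto simp: proj_def scalar_prod_def lessThan_atLeast0)
  also have "\<dots> = (\<Sum>l<n. \<Sum>k<n. W $$ (i,k) * v $ k * cnj (W $$ (j,l) * v $ l))"
    unfolding sum_distrib_right by (simp add: mult_ac)
  also have "\<dots> = (\<Sum>k<n. \<Sum>l<n. W $$ (i,k) * v $ k * cnj (W $$ (j,l) * v $ l))"
    by (rule sum.swap)
  also have "\<dots> = (\<Sum>k<n. W $$ (i,k) * v $ k) * cnj (\<Sum>l<n. W $$ (j,l) * v $ l)"
    by (simp only: cnj_sum sum_product)
  also have "\<dots> = proj (W *\<^sub>v v) $$ (i,j)"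
    using assms i j by (auto simp: proj_def scalar_prod_def lessThan_atLeast0)
  finally show "proj (W *\<^sub>v v) $$ (i, j) = (W * proj v * adj W) $$ (i, j)" by simp
qed (use assms in \<open>auto simp: proj_def\<close>)

lemma psi_eq: assumes "\<psi> \<in> carrier_vec 4"
  shows "kron (1\<^sub>m 2) (Vm \<psi>) *\<^sub>v phi = \<psi>"
proof (rule eq_vecI)
  fix i assume "i < dim_vec \<psi>"
  then have "i = 0 \<or> i = 1 \<or> i = 2 \<or> i = 3" using assms by auto
  then show "(kron (1\<^sub>m 2) (Vm \<psi>) *\<^sub>v phi) $ i = \<psi> $ i"
    by (auto simp: kron_def Vm_def phi_def scalar_prod_def sum4')
qed (use assms in \<open>auto simp: kron_def Vm_def\<close>)

lemma W_unitary:
  fixes V :: "complex mat"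
  assumes V: "V \<in> carrier_mat 2 2" and u1: "V * adj V = 1\<^sub>m 2" and u2: "adj V * V = 1\<^sub>m 2"
  shows "kron (1\<^sub>m 2) V * adj (kron (1\<^sub>m 2) V) = 1\<^sub>m 4"
    "adj (kron (1\<^sub>m 2) V) * kron (1\<^sub>m 2) V = 1\<^sub>m 4"
proof -
  have e1: "V $$ (b,0) * cnj (V $$ (b',0)) + V $$ (b,1) * cnj (V $$ (b',1)) = (if b = b' then 1 else 0)"
    if "b < 2" "b' < 2" for b b'
  proof -
    have "(V * adj V) $$ (b,b') = (if b = b' then 1 else 0)" using u1 that by simp
    then show ?thesis using V that by (simp add: scalar_prod_def sum2')
  qed
  have e2: "cnj (V $$ (0,a)) * V $$ (0,a') + cnj (V $$ (1,a)) * V $$ (1,a') = (if a = a' then 1 else 0)"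
    if "a < 2" "a' < 2" for a a'
  proof -
    have "(adj V * V) $$ (a,a') = (if a = a' then 1 else 0)" using u2 that by simp
    then show ?thesis using V that by (simp add: scalar_prod_def sum2')
  qed
  note e = e1[of 0 0] e1[of 0 1] e1[of 1 0] e1[of 1 1] e2[of 0 0] e2[of 0 1] e2[of 1 0] e2[of 1 1]
  show "kron (1\<^sub>m 2) V * adj (kron (1\<^sub>m 2) V) = 1\<^sub>m 4"
  proof (rule eq_matI)
    fix i j assume "i < dim_row (1\<^sub>m 4 :: complex mat)" "j < dim_col (1\<^sub>m 4 :: complex mat)"
    then have "i = 0 \<or> i = 1 \<or> i = 2 \<or> i = 3" "j = 0 \<or> j = 1 \<or> j = 2 \<or> j = 3" by auto
    then show "(kron (1\<^sub>m 2) V * adj (kron (1\<^sub>m 2) V)) $$ (i, j) = 1\<^sub>m 4 $$ (i, j)"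
      using V e by (auto simp: kron_def scalar_prod_def sum4' adj_def)
  qed (use V in \<open>auto simp: kron_def\<close>)
  show "adj (kron (1\<^sub>m 2) V) * kron (1\<^sub>m 2) V = 1\<^sub>m 4"
  proof (rule eq_matI)
    fix i j assume "i < dim_row (1\<^sub>m 4 :: complex mat)" "j < dim_col (1\<^sub>m 4 :: complex mat)"
    then have "i = 0 \<or> i = 1 \<or> i = 2 \<or> i = 3" "j = 0 \<or> j = 1 \<or> j = 2 \<or> j = 3" by auto
    then show "(adj (kron (1\<^sub>m 2) V) * kron (1\<^sub>m 2) V) $$ (i, j) = 1\<^sub>m 4 $$ (i, j)"
      using V e by (auto simp: kron_def scalar_prod_def sum4' adj_def)
  qed (use V in \<open>auto simp: kron_def\<close>)
qed

lemma Vm_prod: "b < 2 \<Longrightarrow> a < 2 \<Longrightarrow> b' < 2 \<Longrightarrow> a' < 2 \<Longrightarrow>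
   Vm \<psi> $$ (b,a) * cnj (Vm \<psi> $$ (b',a')) = 2 * (\<psi> $ (2*a+b) * cnj (\<psi> $ (2*a'+b')))"
proof -
  assume "b < 2" "a < 2" "b' < 2" "a' < 2"
  then have "Vm \<psi> $$ (b,a) * cnj (Vm \<psi> $$ (b',a')) =
    (complex_of_real (sqrt 2) * complex_of_real (sqrt 2)) * (\<psi> $ (2*a+b) * cnj (\<psi> $ (2*a'+b')))"
    by (simp add: Vm_def mult_ac)
  also have "complex_of_real (sqrt 2) * complex_of_real (sqrt 2) = 2"
    by (simp flip: of_real_mult)
  finally show ?thesis .
qed

lemma Vm_unitary:
  assumes psi: "\<psi> \<in> carrier_vec 4"
    and A: "ptrace_A (proj \<psi>) = (1/2) \<cdot>\<^sub>m 1\<^sub>m 2" and B: "ptrace_B (proj \<psi>) = (1/2) \<cdot>\<^sub>m 1\<^sub>m 2"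
  shows "Vm \<psi> * adj (Vm \<psi>) = 1\<^sub>m 2" "adj (Vm \<psi>) * Vm \<psi> = 1\<^sub>m 2"
proof -
  have eA: "\<psi> $ b * cnj (\<psi> $ b') + \<psi> $ (2+b) * cnj (\<psi> $ (2+b')) = (if b = b' then 1/2 else 0)"
    if "b < 2" "b' < 2" for b b'
  proof -
    have "ptrace_A (proj \<psi>) $$ (b,b') = (if b = b' then 1/2 else 0)" using A that by simp
    then show ?thesis using psi that by (simp add: ptrace_A_def proj_def numeral_eq_Suc)
  qed
  have eB: "\<psi> $ (2*a) * cnj (\<psi> $ (2*a')) + \<psi> $ (2*a+1) * cnj (\<psi> $ (2*a'+1)) = (if a = a' then 1/2 else 0)"
    if "a < 2" "a' < 2" for a a'
  proof -
    have "ptrace_B (proj \<psi>) $$ (a,a') = (if a = a' then 1/2 else 0)" using B that by simp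
    then show ?thesis using psi that by (simp add: ptrace_B_def proj_def numeral_eq_Suc)
  qed
  show "Vm \<psi> * adj (Vm \<psi>) = 1\<^sub>m 2"
  proof (rule eq_matI)
    fix i j assume "i < dim_row (1\<^sub>m 2 :: complex mat)" "j < dim_col (1\<^sub>m 2 :: complex mat)"
    then have ij: "i < 2" "j < 2" by auto
    have "(Vm \<psi> * adj (Vm \<psi>)) $$ (i, j) = Vm \<psi> $$ (i,0) * cnj (Vm \<psi> $$ (j,0)) + Vm \<psi> $$ (i,1) * cnj (Vm \<psi> $$ (j,1))"
      using ij by (simp add: scalar_prod_def sum2' Vm_def)
    also have "\<dots> = 2 * (\<psi> $ i * cnj (\<psi> $ j) + \<psi> $ (2+i) * cnj (\<psi> $ (2+j)))"
      using ij by (simp add: Vm_prod algebra_simps)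
    also have "\<dots> = 1\<^sub>m 2 $$ (i,j)" using eA[OF ij] ij by simp
    finally show "(Vm \<psi> * adj (Vm \<psi>)) $$ (i, j) = 1\<^sub>m 2 $$ (i,j)" .
  qed (auto simp: Vm_def)
  show "adj (Vm \<psi>) * Vm \<psi> = 1\<^sub>m 2"
  proof (rule eq_matI)
    fix i j assume "i < dim_row (1\<^sub>m 2 :: complex mat)" "j < dim_col (1\<^sub>m 2 :: complex mat)"
    then have ij: "i < 2" "j < 2" by auto
    have "(adj (Vm \<psi>) * Vm \<psi>) $$ (i, j) = cnj (Vm \<psi> $$ (0,i) * cnj (Vm \<psi> $$ (0,j)) + Vm \<psi> $$ (1,i) * cnj (Vm \<psi> $$ (1,j)))"
      using ij by (simp add: scalar_prod_def sum2' Vm_def mult_ac)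
    also have "\<dots> = cnj (2 * (\<psi> $ (2*i) * cnj (\<psi> $ (2*j)) + \<psi> $ (2*i+1) * cnj (\<psi> $ (2*j+1))))"
      using ij by (simp add: Vm_prod algebra_simps)
    also have "\<dots> = 1\<^sub>m 2 $$ (i,j)" using eB[of i j] ij by auto
    finally show "(adj (Vm \<psi>) * Vm \<psi>) $$ (i, j) = 1\<^sub>m 2 $$ (i,j)" .
  qed (auto simp: Vm_def)
qed

lemma key:
  assumes "max_ent_pure \<rho>"
  shows "char_poly (adj (amp_damp_A m1 \<rho> - amp_damp_A m2 \<rho>) * (amp_damp_A m1 \<rho> - amp_damp_A m2 \<rho>))
    = char_poly (adj (amp_damp_A m1 (proj phi) - amp_damp_A m2 (proj phi)) * (amp_damp_A m1 (proj phi) - amp_damp_A m2 (proj phi)))"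
proof -
  obtain \<psi> where psi: "\<psi> \<in> carrier_vec 4" and rho: "\<rho> = proj \<psi>"
    and A: "ptrace_A \<rho> = (1/2) \<cdot>\<^sub>m 1\<^sub>m 2" and B: "ptrace_B \<rho> = (1/2) \<cdot>\<^sub>m 1\<^sub>m 2"
    using assms unfolding max_ent_pure_def by blast
  define W where "W = kron (1\<^sub>m 2) (Vm \<psi>)"
  have W4: "W \<in> carrier_mat 4 4" unfolding W_def by (rule W_carrier) simp
  have P4: "proj phi \<in> carrier_mat 4 4" by (simp add: proj_def phi_def)
  have u: "W * adj W = 1\<^sub>m 4" "adj W * W = 1\<^sub>m 4"
    using W_unitary[OF Vm_carrier Vm_unitary[OF psi A[unfolded rho] B[unfolded rho]]]
    unfolding W_def by auto
  have r: "\<rho> = W * proj phi * adj W"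
    using rho proj_mult[OF W4 phi_carrier] psi_eq[OF psi] unfolding W_def by simp
  have a1: "amp_damp_A m1 \<rho> = W * amp_damp_A m1 (proj phi) * adj W"
    unfolding r W_def by (rule amp_conj) (auto simp: P4)
  have a2: "amp_damp_A m2 \<rho> = W * amp_damp_A m2 (proj phi) * adj W"
    unfolding r W_def by (rule amp_conj) (auto simp: P4)
  have c1: "amp_damp_A m1 (proj phi) \<in> carrier_mat 4 4" by (rule amp_carrier[OF P4])
  have c2: "amp_damp_A m2 (proj phi) \<in> carrier_mat 4 4" by (rule amp_carrier[OF P4])
  have "amp_damp_A m1 \<rho> - amp_damp_A m2 \<rho> = W * (amp_damp_A m1 (proj phi) - amp_damp_A m2 (proj phi)) * adj W"
    unfolding a1 a2
    using mult_minus_distrib_mat[OF W4 c1 c2] minus_mult_distrib_mat[OF mult4[OF W4 c1] mult4[OF W4 c2] adj4[OF W4]]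
    by simp
  then show ?thesis
    using final_conj[OF W4 minus_carrier_mat[OF c2] u(2) u(1)] by simp
qed

theorem lemma3:
  fixes \<mu>1 \<mu>2 :: real and \<rho> \<sigma> :: "complex mat"
  assumes "0 < \<mu>1" "\<mu>1 < 1" "0 < \<mu>2" "\<mu>2 < 1" "\<mu>1 > \<mu>2"
    and "max_ent_pure \<rho>" and "max_ent_pure \<sigma>"
  shows "trace_norm (amp_damp_A \<mu>1 \<rho> - amp_damp_A \<mu>2 \<rho>)
       = trace_norm (amp_damp_A \<mu>1 \<sigma> - amp_damp_A \<mu>2 \<sigma>)"
  unfolding trace_norm_def key[OF assms(6)] key[OF assms(7)] ..

end
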